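(* Let $\alpha_1,\dots,\alpha_4$ be constants, $H=H(t,t^-,q,q^-,p,p^-)$ smooth, and $X=\eta(t,q,p)\partial_q+\nu(t,q,p)\partial_p$ (i.e. $\xi\equiv0$) such that $$\Omega=\nu^{-}(\alpha_{1}\dot{q}+\alpha_{2}\dot{q}^{-})+p^{-}(\alpha_{1}D(\eta)+\alpha_{2}D(\eta^{-}))+\nu(\alpha_{3}\dot{q}+\alpha_{4}\dot{q}^{-})+p(\alpha_{3}D(\eta)+\alpha_{4}D(\eta^{-}))-\eta H_q-\nu H_p-\eta^{-}H_{q^-}-\nu^{-}H_{p^-}=0.$$ Then on the solutions of the delay canonical Hamiltonian equations $$\alpha_{1}\dot{q}^{+}+(\alpha_{2}+\alpha_{3})\dot{q}+\alpha_{4}\dot{q}^{-}=\frac{\partial}{\partial p}(H+H^{+}),\qquad \alpha_{4}\dot{p}^{+}+(\alpha_{2}+\alpha_{3})\dot{p}+\alpha_{1}\dot{p}^{-}=-\frac{\partial}{\partial q}(H+H^{+}),$$ considered with the constant delay $t^+-t=t-t^-=\tau$, the relation $D(C)=(S_+-1)P$ holds, where $C=\eta(\alpha_{4}p^{+}+(\alpha_{2}+\alpha_{3})p+\alpha_{1}p^{-})$ and $P=(\alpha_{2}p^{-}+\alpha_{4}p)D(\eta^{-})+\nu^{-}(\alpha_{1}\dot{q}+\alpha_{2}\dot{q}^{-})-\eta^{-}H_{q^-}-\nu^{-}H_{p^-}$.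
   Context: Constant delay $\tau>0$; $t^\pm=t\pm\tau$, $f^\pm=f(t\pm\tau)$; scalar $q,p$. $S_\pm$ are the forward/backward shift operators on expressions (shifting all arguments by one step); $\eta^\pm=S_\pm(\eta)$, $\nu^\pm=S_\pm(\nu)$; $H^+=S_+(H)=H(t^+,t,q^+,q,p^+,p)$. $D$ is the total derivative acting on variables at $t^-,t,t^+$. $\Omega$ is the invariance expression $X(\tilde H)+\tilde HD(\xi)$ with $\tilde H=p^{-}(\alpha_{1}\dot{q}+\alpha_{2}\dot{q}^{-})+p(\alpha_{3}\dot{q}+\alpha_{4}\dot{q}^{-})-H$, specialized to $\xi\equiv0$. *)

theory Defs
  imports "HOL-Analysis.Analysis"
begin

definition pd_t :: "(real \<Rightarrow> real \<Rightarrow> real \<Rightarrow> real) \<Rightarrow> real \<Rightarrow> real \<Rightarrow> real \<Rightarrow> real" where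
  "pd_t f t q p = deriv (\<lambda>s. f s q p) t"
definition pd_q :: "(real \<Rightarrow> real \<Rightarrow> real \<Rightarrow> real) \<Rightarrow> real \<Rightarrow> real \<Rightarrow> real \<Rightarrow> real" where
  "pd_q f t q p = deriv (\<lambda>s. f t s p) q"
definition pd_p :: "(real \<Rightarrow> real \<Rightarrow> real \<Rightarrow> real) \<Rightarrow> real \<Rightarrow> real \<Rightarrow> real \<Rightarrow> real" where
  "pd_p f t q p = deriv (\<lambda>s. f t q s) p"

text \<open>Total derivative D(f) of f(t,q,p) as an expression in the jet variables (t,q,p,qdot,pdot).\<close>
definition Dtot :: "(real \<Rightarrow> real \<Rightarrow> real \<Rightarrow> real) \<Rightarrow> real \<Rightarrow> real \<Rightarrow> real \<Rightarrow> real \<Rightarrow> real \<Rightarrow> real" where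
  "Dtot f t q p qd pd = pd_t f t q p + pd_q f t q p * qd + pd_p f t q p * pd"

type_synonym ham = "real \<Rightarrow> real \<Rightarrow> real \<Rightarrow> real \<Rightarrow> real \<Rightarrow> real \<Rightarrow> real"

definition H_q :: "ham \<Rightarrow> ham" where
  "H_q H t tm q qm p pm = deriv (\<lambda>s. H t tm s qm p pm) q"
definition H_qm :: "ham \<Rightarrow> ham" where
  "H_qm H t tm q qm p pm = deriv (\<lambda>s. H t tm q s p pm) qm"
definition H_p :: "ham \<Rightarrow> ham" where
  "H_p H t tm q qm p pm = deriv (\<lambda>s. H t tm q qm s pm) p"
definition H_pm :: "ham \<Rightarrow> ham" where
  "H_pm H t tm q qm p pm = deriv (\<lambda>s. H t tm q qm p s) pm"

end

theory Submission
  imports Defs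
begin

lemma chain_eta:
  fixes \<eta> :: "real \<Rightarrow> real \<Rightarrow> real \<Rightarrow> real" and q p :: "real \<Rightarrow> real"
  assumes d: "\<forall>x. (\<lambda>(t, q, p). \<eta> t q p) differentiable (at x)"
    and hq: "(q has_real_derivative qd) (at t)" and hp: "(p has_real_derivative pd) (at t)"
  shows "((\<lambda>s. \<eta> s (q s) (p s)) has_real_derivative Dtot \<eta> t (q t) (p t) qd pd) (at t)"
proof -
  define F where "F = (\<lambda>(t, q, p). \<eta> t q p)"
  obtain D where hD: "(F has_derivative D) (at (t, q t, p t))"
    using d unfolding F_def differentiable_def by blast
  have lin: "linear D" using hD has_derivative_linear by blast
  have g: "((\<lambda>s. (s, q s, p s)) has_derivative (\<lambda>h. (h, h * qd, h * pd))) (at t)"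
    using hq hp unfolding has_field_derivative_def
    by (auto intro!: derivative_eq_intros)
  have c: "((\<lambda>s. F (s, q s, p s)) has_derivative (\<lambda>h. D (h, h * qd, h * pd))) (at t)"
    using has_derivative_compose[OF g hD] by (simp add: o_def)
  have e1: "D (h, h * qd, h * pd) = h * (D (1,0,0) + qd * D (0,1,0) + pd * D(0,0,1))" for h
  proof -
    have "D (h, h * qd, h * pd) = D (h *\<^sub>R (1,0,0) + (h*qd) *\<^sub>R (0,1,0) + (h*pd) *\<^sub>R (0,0,1))"
      by simp
    also have "\<dots> = h * D (1,0,0) + (h*qd) * D (0,1,0) + (h*pd) * D(0,0,1)"
      unfolding linear_add[OF lin] linear_scale[OF lin] by simp
    finally have "D (h, h * qd, h * pd) = h * D (1,0,0) + (h*qd) * D (0,1,0) + (h*pd) * D(0,0,1)" .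
    then show ?thesis by (simp add: algebra_simps)
  qed
  have Fe: "\<eta> a b c = F (a, b, c)" for a b c by (simp add: F_def)
  have sc1: "D (h, 0, 0) = D (1,0,0) * h" for h
    using linear_scale[OF lin, of h "(1,0,0)"] by (simp add: mult.commute)
  have sc2: "D (0, h, 0) = D (0,1,0) * h" for h
    using linear_scale[OF lin, of h "(0,1,0)"] by (simp add: mult.commute)
  have sc3: "D (0, 0, h) = D (0,0,1) * h" for h
    using linear_scale[OF lin, of h "(0,0,1)"] by (simp add: mult.commute)
  have p1: "pd_t \<eta> t (q t) (p t) = D (1,0,0)"
  proof -
    have "((\<lambda>s. (s, q t, p t)) has_derivative (\<lambda>h. (h, 0, 0))) (at t)"
      by (auto intro!: derivative_eq_intros) (simp add: zero_prod_def)
    from has_derivative_compose[OF this hD]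
    have "((\<lambda>s. \<eta> s (q t) (p t)) has_real_derivative D (1,0,0)) (at t)"
      unfolding has_field_derivative_def Fe o_def
      by (rule has_derivative_eq_rhs) (rule ext, rule sc1)
    then show ?thesis unfolding pd_t_def by (rule DERIV_imp_deriv)
  qed
  have p2: "pd_q \<eta> t (q t) (p t) = D (0,1,0)"
  proof -
    have "((\<lambda>s. (t, s, p t)) has_derivative (\<lambda>h. (0, h, 0))) (at (q t))"
      by (auto intro!: derivative_eq_intros simp: zero_prod_def)
    from has_derivative_compose[OF this hD]
    have "((\<lambda>s. \<eta> t s (p t)) has_real_derivative D (0,1,0)) (at (q t))"
      unfolding has_field_derivative_def Fe o_def
      by (rule has_derivative_eq_rhs) (rule ext, rule sc2)
    then show ?thesis unfolding pd_q_def by (rule DERIV_imp_deriv)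
  qed
  have p3: "pd_p \<eta> t (q t) (p t) = D (0,0,1)"
  proof -
    have "((\<lambda>s. (t, q t, s)) has_derivative (\<lambda>h. (0, 0, h))) (at (p t))"
      by (auto intro!: derivative_eq_intros simp: zero_prod_def)
    from has_derivative_compose[OF this hD]
    have "((\<lambda>s. \<eta> t (q t) s) has_real_derivative D (0,0,1)) (at (p t))"
      unfolding has_field_derivative_def Fe o_def
      by (rule has_derivative_eq_rhs) (rule ext, rule sc3)
    then show ?thesis unfolding pd_p_def by (rule DERIV_imp_deriv)
  qed
  show ?thesis
    unfolding has_field_derivative_def Dtot_def p1 p2 p3 Fe
    by (rule has_derivative_eq_rhs[OF c]) (auto simp: fun_eq_iff e1 algebra_simps)
qed

theorem proposition4:
  fixes \<tau> \<alpha>1 \<alpha>2 \<alpha>3 \<alpha>4 :: real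
    and H :: ham
    and \<eta> \<nu> :: "real \<Rightarrow> real \<Rightarrow> real \<Rightarrow> real"
    and q p :: "real \<Rightarrow> real"
  assumes tau_pos: "\<tau> > 0"
    and H_diff: "\<forall>x. (\<lambda>(t, tm, q, qm, p, pm). H t tm q qm p pm) differentiable (at x)"
    and eta_diff: "\<forall>x. (\<lambda>(t, q, p). \<eta> t q p) differentiable (at x)"
    and nu_diff: "\<forall>x. (\<lambda>(t, q, p). \<nu> t q p) differentiable (at x)"
    and Omega_zero:
      "\<forall>t q qm p pm qd qdm pd pdm.
         \<nu> (t - \<tau>) qm pm * (\<alpha>1 * qd + \<alpha>2 * qdm)
         + pm * (\<alpha>1 * Dtot \<eta> t q p qd pd + \<alpha>2 * Dtot \<eta> (t - \<tau>) qm pm qdm pdm)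
         + \<nu> t q p * (\<alpha>3 * qd + \<alpha>4 * qdm)
         + p * (\<alpha>3 * Dtot \<eta> t q p qd pd + \<alpha>4 * Dtot \<eta> (t - \<tau>) qm pm qdm pdm)
         - \<eta> t q p * H_q H t (t - \<tau>) q qm p pm
         - \<nu> t q p * H_p H t (t - \<tau>) q qm p pm
         - \<eta> (t - \<tau>) qm pm * H_qm H t (t - \<tau>) q qm p pm
         - \<nu> (t - \<tau>) qm pm * H_pm H t (t - \<tau>) q qm p pm = 0"
    and q_diff: "\<forall>t. q differentiable (at t)"
    and p_diff: "\<forall>t. p differentiable (at t)"
    and eq_q: "\<forall>t. \<alpha>1 * deriv q (t + \<tau>) + (\<alpha>2 + \<alpha>3) * deriv q t + \<alpha>4 * deriv q (t - \<tau>)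
                  = H_p H t (t - \<tau>) (q t) (q (t - \<tau>)) (p t) (p (t - \<tau>))
                    + H_pm H (t + \<tau>) t (q (t + \<tau>)) (q t) (p (t + \<tau>)) (p t)"
    and eq_p: "\<forall>t. \<alpha>4 * deriv p (t + \<tau>) + (\<alpha>2 + \<alpha>3) * deriv p t + \<alpha>1 * deriv p (t - \<tau>)
                  = - (H_q H t (t - \<tau>) (q t) (q (t - \<tau>)) (p t) (p (t - \<tau>))
                       + H_qm H (t + \<tau>) t (q (t + \<tau>)) (q t) (p (t + \<tau>)) (p t))"
  shows "\<forall>t. ((\<lambda>s. \<eta> s (q s) (p s) * (\<alpha>4 * p (s + \<tau>) + (\<alpha>2 + \<alpha>3) * p s + \<alpha>1 * p (s - \<tau>)))
              has_real_derivative
              ((\<lambda>s. (\<alpha>2 * p (s - \<tau>) + \<alpha>4 * p s)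
                       * Dtot \<eta> (s - \<tau>) (q (s - \<tau>)) (p (s - \<tau>)) (deriv q (s - \<tau>)) (deriv p (s - \<tau>))
                     + \<nu> (s - \<tau>) (q (s - \<tau>)) (p (s - \<tau>)) * (\<alpha>1 * deriv q s + \<alpha>2 * deriv q (s - \<tau>))
                     - \<eta> (s - \<tau>) (q (s - \<tau>)) (p (s - \<tau>)) * H_qm H s (s - \<tau>) (q s) (q (s - \<tau>)) (p s) (p (s - \<tau>))
                     - \<nu> (s - \<tau>) (q (s - \<tau>)) (p (s - \<tau>)) * H_pm H s (s - \<tau>) (q s) (q (s - \<tau>)) (p s) (p (s - \<tau>)))
                 (t + \<tau>)
               - (\<lambda>s. (\<alpha>2 * p (s - \<tau>) + \<alpha>4 * p s)
                       * Dtot \<eta> (s - \<tau>) (q (s - \<tau>)) (p (s - \<tau>)) (deriv q (s - \<tau>)) (deriv p (s - \<tau>))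
                     + \<nu> (s - \<tau>) (q (s - \<tau>)) (p (s - \<tau>)) * (\<alpha>1 * deriv q s + \<alpha>2 * deriv q (s - \<tau>))
                     - \<eta> (s - \<tau>) (q (s - \<tau>)) (p (s - \<tau>)) * H_qm H s (s - \<tau>) (q s) (q (s - \<tau>)) (p s) (p (s - \<tau>))
                     - \<nu> (s - \<tau>) (q (s - \<tau>)) (p (s - \<tau>)) * H_pm H s (s - \<tau>) (q s) (q (s - \<tau>)) (p s) (p (s - \<tau>)))
                 t)) (at t)"
proof
  fix t
  have hq: "\<And>s. (q has_real_derivative deriv q s) (at s)"
    using q_diff DERIV_deriv_iff_real_differentiable by blast
  have hp: "\<And>s. (p has_real_derivative deriv p s) (at s)"
    using p_diff DERIV_deriv_iff_real_differentiable by blast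
  have hpp: "((\<lambda>s. p (s + \<tau>)) has_real_derivative deriv p (t + \<tau>)) (at t)"
  proof -
    have "((\<lambda>s. s + \<tau>) has_real_derivative 1) (at t)" by (auto intro!: derivative_eq_intros)
    from DERIV_chain2[where g="\<lambda>s. s + \<tau>" and x=t and f=p and Db=1 and s=UNIV, OF hp[of "t + \<tau>"] this]
    show ?thesis by simp
  qed
  have hpm: "((\<lambda>s. p (s - \<tau>)) has_real_derivative deriv p (t - \<tau>)) (at t)"
  proof -
    have "((\<lambda>s. s - \<tau>) has_real_derivative 1) (at t)" by (auto intro!: derivative_eq_intros)
    from DERIV_chain2[where g="\<lambda>s. s - \<tau>" and x=t and f=p and Db=1 and s=UNIV, OF hp[of "t - \<tau>"] this]
    show ?thesis by simp
  qed
  have hE: "((\<lambda>s. \<eta> s (q s) (p s)) has_real_derivative Dtot \<eta> t (q t) (p t) (deriv q t) (deriv p t)) (at t)"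
    by (rule chain_eta[OF eta_diff hq hp])
  have hC: "((\<lambda>s. \<eta> s (q s) (p s) * (\<alpha>4 * p (s + \<tau>) + (\<alpha>2 + \<alpha>3) * p s + \<alpha>1 * p (s - \<tau>)))
     has_real_derivative Dtot \<eta> t (q t) (p t) (deriv q t) (deriv p t) * (\<alpha>4 * p (t + \<tau>) + (\<alpha>2 + \<alpha>3) * p t + \<alpha>1 * p (t - \<tau>))
       + \<eta> t (q t) (p t) * (\<alpha>4 * deriv p (t + \<tau>) + (\<alpha>2 + \<alpha>3) * deriv p t + \<alpha>1 * deriv p (t - \<tau>))) (at t)"
    by (rule DERIV_cong[OF DERIV_mult[OF hE DERIV_add[OF DERIV_add[OF DERIV_cmult[OF hpp] DERIV_cmult[OF hp]] DERIV_cmult[OF hpm]]]]) (simp add: algebra_simps)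
  have O: "\<nu> (t - \<tau>) (q (t - \<tau>)) (p (t - \<tau>)) * (\<alpha>1 * deriv q t + \<alpha>2 * deriv q (t - \<tau>))
         + p (t - \<tau>) * (\<alpha>1 * Dtot \<eta> t (q t) (p t) (deriv q t) (deriv p t) + \<alpha>2 * Dtot \<eta> (t - \<tau>) (q (t - \<tau>)) (p (t - \<tau>)) (deriv q (t - \<tau>)) (deriv p (t - \<tau>)))
         + \<nu> t (q t) (p t) * (\<alpha>3 * deriv q t + \<alpha>4 * deriv q (t - \<tau>))
         + p t * (\<alpha>3 * Dtot \<eta> t (q t) (p t) (deriv q t) (deriv p t) + \<alpha>4 * Dtot \<eta> (t - \<tau>) (q (t - \<tau>)) (p (t - \<tau>)) (deriv q (t - \<tau>)) (deriv p (t - \<tau>)))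
         - \<eta> t (q t) (p t) * H_q H t (t - \<tau>) (q t) (q (t - \<tau>)) (p t) (p (t - \<tau>))
         - \<nu> t (q t) (p t) * H_p H t (t - \<tau>) (q t) (q (t - \<tau>)) (p t) (p (t - \<tau>))
         - \<eta> (t - \<tau>) (q (t - \<tau>)) (p (t - \<tau>)) * H_qm H t (t - \<tau>) (q t) (q (t - \<tau>)) (p t) (p (t - \<tau>))
         - \<nu> (t - \<tau>) (q (t - \<tau>)) (p (t - \<tau>)) * H_pm H t (t - \<tau>) (q t) (q (t - \<tau>)) (p t) (p (t - \<tau>)) = 0"
    using Omega_zero by blast
  have Q: "\<alpha>1 * deriv q (t + \<tau>) + (\<alpha>2 + \<alpha>3) * deriv q t + \<alpha>4 * deriv q (t - \<tau>)
                  = H_p H t (t - \<tau>) (q t) (q (t - \<tau>)) (p t) (p (t - \<tau>))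
                    + H_pm H (t + \<tau>) t (q (t + \<tau>)) (q t) (p (t + \<tau>)) (p t)"
    using eq_q by blast
  have P: "\<alpha>4 * deriv p (t + \<tau>) + (\<alpha>2 + \<alpha>3) * deriv p t + \<alpha>1 * deriv p (t - \<tau>)
                  = - (H_q H t (t - \<tau>) (q t) (q (t - \<tau>)) (p t) (p (t - \<tau>))
                       + H_qm H (t + \<tau>) t (q (t + \<tau>)) (q t) (p (t + \<tau>)) (p t))"
    using eq_p by blast
  show "((\<lambda>s. \<eta> s (q s) (p s) * (\<alpha>4 * p (s + \<tau>) + (\<alpha>2 + \<alpha>3) * p s + \<alpha>1 * p (s - \<tau>)))
              has_real_derivative
              ((\<lambda>s. (\<alpha>2 * p (s - \<tau>) + \<alpha>4 * p s)
                       * Dtot \<eta> (s - \<tau>) (q (s - \<tau>)) (p (s - \<tau>)) (deriv q (s - \<tau>)) (deriv p (s - \<tau>))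
                     + \<nu> (s - \<tau>) (q (s - \<tau>)) (p (s - \<tau>)) * (\<alpha>1 * deriv q s + \<alpha>2 * deriv q (s - \<tau>))
                     - \<eta> (s - \<tau>) (q (s - \<tau>)) (p (s - \<tau>)) * H_qm H s (s - \<tau>) (q s) (q (s - \<tau>)) (p s) (p (s - \<tau>))
                     - \<nu> (s - \<tau>) (q (s - \<tau>)) (p (s - \<tau>)) * H_pm H s (s - \<tau>) (q s) (q (s - \<tau>)) (p s) (p (s - \<tau>)))
                 (t + \<tau>)
               - (\<lambda>s. (\<alpha>2 * p (s - \<tau>) + \<alpha>4 * p s)
                       * Dtot \<eta> (s - \<tau>) (q (s - \<tau>)) (p (s - \<tau>)) (deriv q (s - \<tau>)) (deriv p (s - \<tau>))
                     + \<nu> (s - \<tau>) (q (s - \<tau>)) (p (s - \<tau>)) * (\<alpha>1 * deriv q s + \<alpha>2 * deriv q (s - \<tau>))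
                     - \<eta> (s - \<tau>) (q (s - \<tau>)) (p (s - \<tau>)) * H_qm H s (s - \<tau>) (q s) (q (s - \<tau>)) (p s) (p (s - \<tau>))
                     - \<nu> (s - \<tau>) (q (s - \<tau>)) (p (s - \<tau>)) * H_pm H s (s - \<tau>) (q s) (q (s - \<tau>)) (p s) (p (s - \<tau>)))
                 t)) (at t)"
    apply (rule DERIV_cong[OF hC])
    apply (simp only: add_diff_cancel_right')
    apply (simp only: P)
    using O arg_cong[OF Q, of "\<lambda>x. \<nu> t (q t) (p t) * x"]
    apply (simp add: algebra_simps)
    done
qed

end
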